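(* Let $S$ be a finite multiset of $m$ labeled points $(x,y)\in[0,1]\times\{-1,+1\}$ (a pool whose labels are hidden until queried), let $k\ge 0$ be an integer, and assume $\mathrm{err}(S,\mathcal{H}_{\dashv})\le k/m$. Consider the following procedure: query the labels of the points of $S$ in decreasing order of $x$ (from highest to lowest), stopping as soon as $k+1$ negative labels have been observed (or all points have been queried); then output a hypothesis $\hat h\in\mathcal{H}_{\dashv}$ that minimizes the error on the set of queried (now labeled) points. Then $\mathrm{err}(S,\hat h)=\mathrm{err}(S,\mathcal{H}_{\dashv})$, and the procedure queries at most $k+1$ points whose label is negative (auditing complexity $k+1$).
   Context: For $a\in[0,1]$, the threshold hypothesis $h_a:[0,1]\to\{-1,+1\}$ is $h_a(x)=+1$ if $x\ge a$ and $h_a(x)=-1$ otherwise; $\mathcal{H}_{\dashv}=\{h_a : a\in[0,1]\}$. For a multiset $S$ of labeled points, $\mathrm{err}(S,h)=\frac{1}{|S|}\sum_{(x,y)\in S}\mathbb{I}[h(x)\ne y]$ and $\mathrm{err}(S,\mathcal{H})=\min_{h\in\mathcal{H}}\mathrm{err}(S,h)$. The auditing complexity of a procedure is the number of queries it makes on points whose label is negative. *)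

theory Defs
  imports Complex_Main "HOL-Library.Multiset"
begin

definition thr :: "real \<Rightarrow> real \<Rightarrow> int" where
  "thr a x = (if x \<ge> a then 1 else -1)"

definition err :: "(real \<times> int) multiset \<Rightarrow> (real \<Rightarrow> int) \<Rightarrow> real" where
  "err S h = (\<Sum>p\<in>#S. (if h (fst p) \<noteq> snd p then 1 else 0)) / real (size S)"

text \<open>Error of the threshold class: the minimum (infimum; attained, finitely many values).\<close>
definition errH :: "(real \<times> int) multiset \<Rightarrow> real" where
  "errH S = Inf ((\<lambda>a. err S (thr a)) ` {0..1})"

fun queried :: "nat \<Rightarrow> (real \<times> int) list \<Rightarrow> (real \<times> int) list" where
  "queried k [] = []"
| "queried k (p # r) = p # (if snd p = -1 then (if k = 0 then [] else queried (k - 1) r)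
                              else queried k r)"

end

theory Submission
  imports Defs
begin

definition cnt :: "(real \<times> int) list \<Rightarrow> real \<Rightarrow> nat" where
  "cnt xs a = length (filter (\<lambda>p. thr a (fst p) \<noteq> snd p) xs)"

lemma sum_ind_list:
  "(\<Sum>p\<in>#mset xs. (if P p then 1 else 0::real)) = real (length (filter P xs))"
  by (induction xs) auto

lemma err_list: "err (mset xs) (thr a) = real (cnt xs a) / real (length xs)"
  unfolding err_def cnt_def
  by (simp add: sum_ind_list)

lemma cnt_append: "cnt (xs @ ys) a = cnt xs a + cnt ys a"
  unfolding cnt_def by simp

lemma length_filter_mono:
  "(\<And>x. x \<in> set xs \<Longrightarrow> P x \<Longrightarrow> Q x) \<Longrightarrow> length (filter P xs) \<le> length (filter Q xs)"
  by (induction xs) auto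

lemma queried_neg: "length (filter (\<lambda>p. snd p = -1) (queried k q)) \<le> k + 1"
  by (induction k q rule: queried.induct) auto

lemma queried_prefix:
  "\<exists>R. q = queried k q @ R \<and> (R \<noteq> [] \<longrightarrow>
      length (filter (\<lambda>p. snd p = -1) (queried k q)) = k + 1 \<and> snd (last (queried k q)) = -1)"
proof (induction k q rule: queried.induct)
  case (1 k)
  then show ?case by simp
next
  case (2 k p r)
  show ?case
  proof (cases "snd p = -1")
    case True
    show ?thesis
    proof (cases "k = 0")
      case True
      with \<open>snd p = -1\<close> show ?thesis by auto
    next
      case False
      from 2(1)[OF \<open>snd p = -1\<close> False] obtain R where
        R: "r = queried (k-1) r @ R"
           "R \<noteq> [] \<longrightarrow> length (filter (\<lambda>p. snd p = -1) (queried (k-1) r)) = k - 1 + 1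
              \<and> snd (last (queried (k-1) r)) = -1" by blast
      show ?thesis using True False R
        by (rule_tac x=R in exI) auto
    qed
  next
    case False
    from 2(2)[OF False] obtain R where
      R: "r = queried k r @ R"
         "R \<noteq> [] \<longrightarrow> length (filter (\<lambda>p. snd p = -1) (queried k r)) = k + 1
              \<and> snd (last (queried k r)) = -1" by blast
    show ?thesis using False R
      by (rule_tac x=R in exI) auto
  qed
qed

theorem lemma2:
  fixes S :: "(real \<times> int) multiset" and k :: nat
    and q :: "(real \<times> int) list" and a :: real
  assumes pts: "\<forall>p\<in>#S. fst p \<in> {0..1} \<and> snd p \<in> {-1, 1}"
    and err_bound: "errH S \<le> real k / real (size S)"
    and q_perm: "mset q = S"
    and q_order: "sorted_wrt (\<lambda>p p'. fst p \<ge> fst p') q"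
    and a_in: "a \<in> {0..1}"
    and a_min: "\<forall>b\<in>{0..1}. err (mset (queried k q)) (thr a) \<le> err (mset (queried k q)) (thr b)"
  shows "err S (thr a) = errH S
         \<and> length (filter (\<lambda>p. snd p = -1) (queried k q)) \<le> k + 1"
proof -
  define Q where "Q = queried k q"
  obtain R where qQR: "q = Q @ R" and RQ: "R \<noteq> [] \<longrightarrow>
      length (filter (\<lambda>p. snd p = -1) Q) = k + 1 \<and> snd (last Q) = -1"
    using queried_prefix[of q k] unfolding Q_def by blast
  have minS: "\<forall>b\<in>{0..1}. err S (thr a) \<le> err S (thr b)"
  proof (cases "R = []")
    case True
    then show ?thesis using a_min q_perm qQR unfolding Q_def by simp
  next
    case False
    with RQ have negQ: "length (filter (\<lambda>p. snd p = -1) Q) = k + 1"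
      and lastneg: "snd (last Q) = -1" by auto
    have Qne: "Q \<noteq> []" using negQ by auto
    define xs where "xs = fst (last Q)"
    have sQR: "\<forall>x\<in>set Q. \<forall>y\<in>set R. fst x \<ge> fst y"
      using q_order qQR by (simp add: sorted_wrt_append)
    have Rle: "\<forall>y\<in>set R. fst y \<le> xs"
      using sQR Qne unfolding xs_def by auto
    have Qge: "\<forall>x\<in>set Q. fst x \<ge> xs"
    proof
      fix x assume x: "x \<in> set Q"
      have QQ: "Q = butlast Q @ [last Q]" using Qne by simp
      have "sorted_wrt (\<lambda>p p'. fst p \<ge> fst p') Q"
        using q_order qQR by (simp add: sorted_wrt_append)
      hence "\<forall>z\<in>set (butlast Q). fst z \<ge> fst (last Q)"
        using QQ by (metis list.set_intros(1) sorted_wrt_append)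
      moreover have "x \<in> set (butlast Q) \<or> x = last Q" using x QQ
        by (metis butlast_append in_set_butlastD last_in_set rotate1.simps(2) set_ConsD set_rotate1 Qne) 
      ultimately show "fst x \<ge> xs" unfolding xs_def by auto
    qed
    define PR where "PR = length (filter (\<lambda>p. -1 \<noteq> snd p) R)"
    have cntR: "cnt R b = PR" if "b > xs" for b
    proof -
      have "\<forall>p\<in>set R. thr b (fst p) = -1" using Rle that by (auto simp: thr_def)
      hence "filter (\<lambda>p. thr b (fst p) \<noteq> snd p) R = filter (\<lambda>p. -1 \<noteq> snd p) R"
        by (intro filter_cong) auto
      thus ?thesis unfolding cnt_def PR_def by simp
    qed
    have cntQbig: "cnt Q b \<ge> k + 1" if "b \<le> xs" for b
    proof -
      have "length (filter (\<lambda>p. snd p = -1) Q) \<le> cnt Q b"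
        unfolding cnt_def
        by (rule length_filter_mono) (use Qge that in \<open>auto simp: thr_def\<close>)
      thus ?thesis using negQ by simp
    qed
    have Sq: "S = mset q" using q_perm by simp
    have lenS: "length q > 0" using Qne qQR by simp
    have errS: "err S (thr b) = real (cnt q b) / real (length q)" for b
      using Sq err_list by simp
    obtain as where as_in: "as \<in> {0..1}" and as_c: "cnt q as \<le> k"
    proof (rule ccontr)
      assume "\<not> thesis"
      with that have big: "\<forall>b\<in>{0..1}. cnt q b \<ge> k + 1" by force
      have "errH S \<ge> real (k+1) / real (length q)"
        unfolding errH_def
      proof (rule cInf_greatest)
        show "(\<lambda>a. err S (thr a)) ` {0..1} \<noteq> {}" by auto
      next
        fix x assume "x \<in> (\<lambda>a. err S (thr a)) ` {0..1}"
        then obtain b where b: "b \<in> {0..1}" "x = err S (thr b)" by auto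
        have "k+1 \<le> cnt q b" using big b by auto
        hence "real (k+1) \<le> real (cnt q b)" by linarith
        thus "real (k+1) / real (length q) \<le> x" using b errS lenS
          by (simp add: divide_right_mono)
      qed
      moreover have "size S = length q" using Sq by simp
      ultimately have "real (k+1) / real (length q) \<le> real k / real (length q)"
        using err_bound by simp
      thus False using lenS by (simp add: divide_le_cancel)
    qed
    have cq: "cnt q b = cnt Q b + cnt R b" for b using qQR cnt_append by simp
    have as_gt: "as > xs"
    proof (rule ccontr)
      assume "\<not> as > xs"
      hence "cnt Q as \<ge> k+1" using cntQbig by simp
      thus False using as_c cq[of as] by simp
    qed
    have lenQ: "length Q > 0" using Qne by simp
    have Qmin: "cnt Q a \<le> cnt Q b" if "b \<in> {0..1}" for b
    proof -
      have "real (cnt Q a) / real (length Q) \<le> real (cnt Q b) / real (length Q)"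
        using a_min that err_list unfolding Q_def by metis
      thus ?thesis using lenQ by (simp add: divide_le_cancel)
    qed
    have a_gt: "a > xs"
    proof (rule ccontr)
      assume "\<not> a > xs"
      hence "cnt Q a \<ge> k+1" using cntQbig by simp
      moreover have "cnt Q a \<le> cnt Q as" using Qmin as_in by simp
      ultimately show False using as_c cq[of as] by simp
    qed
    have cmin: "cnt q a \<le> cnt q b" if b: "b \<in> {0..1}" for b
    proof (cases "b > xs")
      case True
      then show ?thesis using cq cntR a_gt Qmin[OF b] by simp
    next
      case False
      hence "cnt Q b \<ge> k+1" using cntQbig by simp
      moreover have "cnt q a \<le> cnt q as" using cq cntR a_gt as_gt Qmin[OF as_in] by simp
      ultimately show ?thesis using as_c cq[of b] by simp
    qed
    show ?thesis
    proof
      fix b :: real assume b: "b \<in> {0..1}"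
      show "err S (thr a) \<le> err S (thr b)" unfolding errS
        using cmin[OF b] lenS by (simp add: divide_right_mono)
    qed
  qed
  have "errH S = err S (thr a)"
    unfolding errH_def
    by (rule cInf_eq_minimum) (use a_in minS in auto)
  thus ?thesis using queried_neg[of k q] by simp
qed

end
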